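(* Let $\mathfrak{G}$ be a CFSTR in which every species $X_i$ satisfies $\operatorname{TM}(X_i)\le 2$. Then $\mathfrak{G}$ passes the Jacobian Criterion, and consequently, under mass-action kinetics, $\mathfrak{G}$ does not admit multiple steady states (i.e. for no choice of positive rate constants does the mass-action system have two or more distinct positive steady states).
   Context: A chemical reaction network has species $X_1,\dots,X_s$ and a finite set of reactions $y\to y'$ with complexes $y,y'\in\mathbb{Z}_{\ge0}^s$, $y\neq y'$ ($y$ the reactant complex, $y'$ the product complex; $y_i$ is the stoichiometric coefficient of $X_i$ in $y$); every species appears in some complex. A flow reaction is an inflow $0\to X_i$ or an outflow $X_i\to 0$; all other reactions are non-flow. A reaction $y\to y'$ is reversible if $y'\to y$ is also a reaction. A CFSTR is a network containing the outflow $X_i\to0$ for every species $X_i$. Total molecularity: list the non-flow reactions as $y_1\to y_1',\dots,y_l\to y_l'$ (not reversible) and $y_{l+1}\rightleftarrows y_{l+1}',\dots,y_{l+k}\rightleftarrows y_{l+k}'$ (each reversible pair listed once); then $\operatorname{TM}(X_i)=\sum_{j=1}^{l+k}(y_{ji}+y'_{ji})$. Square networks and orientation: for a list of $n$ reactions $y_k\to y_k'$ on $n$ species, the reactant matrix $M$ is the $n\times n$ matrix with $k$-th row $y_k$ and the reaction matrix $R$ has $k$-th row $y_k-y_k'$ (columns indexed by the species); the orientation is $\operatorname{Or}=\operatorname{sign}(\det M\det R)\in\{-1,0,1\}$, and the empty network has orientation $+1$. Jacobian Criterion: a CFSTR $\mathfrak{G}$ with $s$ species passes the Jacobian Criterion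 if for every choice of $s$ distinct reactions of $\mathfrak{G}$, none of which is an inflow reaction, the $s\times s$ reactant and reaction matrices of these reactions (columns indexed by all $s$ species of $\mathfrak G$) give nonnegative orientation. (By results of Craciun and Feinberg this is equivalent to the determinant of the negative Jacobian of the mass-action vector field $f(x)=\sum_k\kappa_k x^{y_k}(y_k'-y_k)$ being positive for all $x\in\mathbb{R}^s_{>0}$ and all rate constants $\kappa>0$, and it implies that the CFSTR has no multiple positive steady states.) *)

theory Defs
  imports "HOL-Analysis.Analysis"
begin

text \<open>Species are the elements of a finite type 'n (so s = CARD('n)).\<close>

type_synonym 'n complex = "'n \<Rightarrow> nat"
type_synonym 'n reaction = "'n complex \<times> 'n complex"

definition unit_complex :: "'n \<Rightarrow> 'n complex" where
  "unit_complex i = (\<lambda>j. if j = i then 1 else 0)"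

definition is_inflow :: "'n reaction \<Rightarrow> bool" where
  "is_inflow r \<longleftrightarrow> (\<exists>i. r = ((\<lambda>_. 0), unit_complex i))"

definition is_outflow :: "'n reaction \<Rightarrow> bool" where
  "is_outflow r \<longleftrightarrow> (\<exists>i. r = (unit_complex i, (\<lambda>_. 0)))"

definition is_flow :: "'n reaction \<Rightarrow> bool" where
  "is_flow r \<longleftrightarrow> is_inflow r \<or> is_outflow r"

definition reaction_network :: "'n reaction set \<Rightarrow> bool" where
  "reaction_network G \<longleftrightarrow> finite G \<and> (\<forall>(y, y') \<in> G. y \<noteq> y') \<and>
     (\<forall>i. \<exists>(y, y') \<in> G. y i > 0 \<or> y' i > 0)"

definition CFSTR :: "'n reaction set \<Rightarrow> bool" where
  "CFSTR G \<longleftrightarrow> reaction_network G \<and> (\<forall>i. (unit_complex i, (\<lambda>_. 0)) \<in> G)"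

text \<open>Total molecularity: each non-flow reaction y\<rightarrow>y' contributes y_i + y'_i, with a
  reversible pair y \<rightleftarrows> y' counted once. This is realised by summing over the
  unordered pairs {y, y'} arising from non-flow reactions (y \<noteq> y', so the inner sum is y_i + y'_i).\<close>
definition TM :: "'n reaction set \<Rightarrow> 'n \<Rightarrow> nat" where
  "TM G i = (\<Sum>c \<in> {{y, y'} | y y'. (y, y') \<in> G \<and> \<not> is_flow (y, y')}. \<Sum>z \<in> c. z i)"

text \<open>Reactant matrix and reaction matrix of a list of s reactions indexed by the species type.\<close>
definition reactant_matrix :: "('n::finite \<Rightarrow> 'n reaction) \<Rightarrow> real^'n^'n" where
  "reactant_matrix \<sigma> = (\<chi> k j. real (fst (\<sigma> k) j))"

definition reaction_matrix :: "('n::finite \<Rightarrow> 'n reaction) \<Rightarrow> real^'n^'n" where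
  "reaction_matrix \<sigma> = (\<chi> k j. real (fst (\<sigma> k) j) - real (snd (\<sigma> k) j))"

definition orientation :: "('n::finite \<Rightarrow> 'n reaction) \<Rightarrow> real" where
  "orientation \<sigma> = sgn (det (reactant_matrix \<sigma>) * det (reaction_matrix \<sigma>))"

text \<open>Jacobian criterion: every choice of s distinct non-inflow reactions has
  nonnegative orientation (the ordering of the chosen reactions does not affect the orientation).\<close>
definition passes_jacobian_criterion :: "('n::finite) reaction set \<Rightarrow> bool" where
  "passes_jacobian_criterion G \<longleftrightarrow>
     (\<forall>\<sigma> :: 'n \<Rightarrow> 'n reaction. inj \<sigma> \<longrightarrow> range \<sigma> \<subseteq> G \<longrightarrow> (\<forall>k. \<not> is_inflow (\<sigma> k))
        \<longrightarrow> orientation \<sigma> \<ge> 0)"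

definition mass_action :: "('n::finite) reaction set \<Rightarrow> ('n reaction \<Rightarrow> real) \<Rightarrow> real^'n \<Rightarrow> real^'n" where
  "mass_action G \<kappa> x = (\<Sum>r \<in> G. (\<kappa> r * (\<Prod>j\<in>UNIV. (x $ j) ^ fst r j)) *\<^sub>R
        (\<chi> j. real (snd r j) - real (fst r j)))"

definition positive_vec :: "real^'n \<Rightarrow> bool" where
  "positive_vec x \<longleftrightarrow> (\<forall>j. x $ j > 0)"

definition no_multiple_steady_states :: "('n::finite) reaction set \<Rightarrow> bool" where
  "no_multiple_steady_states G \<longleftrightarrow>
     (\<forall>\<kappa>. (\<forall>r\<in>G. \<kappa> r > 0) \<longrightarrow>
        (\<forall>x y. positive_vec x \<longrightarrow> positive_vec y \<longrightarrow>
           mass_action G \<kappa> x = 0 \<longrightarrow> mass_action G \<kappa> y = 0 \<longrightarrow> x = y))"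

end

theory Submission
  imports Defs
begin

lemma det_nz_left_null:
  fixes A :: "real^'n::finite^'n"
  shows "det A \<noteq> 0 \<longleftrightarrow> (\<forall>x. x v* A = 0 \<longrightarrow> x = 0)"
proof -
  have "det A \<noteq> 0 \<longleftrightarrow> invertible (transpose A)"
    by (simp add: invertible_det_nz)
  also have "\<dots> \<longleftrightarrow> (\<forall>x. transpose A *v x = 0 \<longrightarrow> x = 0)"
    by (simp add: invertible_left_inverse matrix_left_invertible_ker)
  finally show ?thesis by simp
qed

lemma token_lemma:
  fixes N :: "'k set" and a b :: "'k \<Rightarrow> nat" and w :: "'k \<Rightarrow> real"
  assumes fin: "finite N" and tok: "(\<Sum>k\<in>N. a k + b k) \<le> 2"
    and wb: "\<forall>k\<in>N. \<bar>w k\<bar> \<le> m" and m: "m > 0" and t: "0 \<le> t" "t < 1"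
    and eq: "(\<Sum>k\<in>N. w k * (real (a k) - t * real (b k))) = 0"
  shows "(\<Sum>k\<in>N. (if \<bar>w k\<bar> = m then w k else 0) * real (a k)) = 0"
proof -
  define Z where "Z = {k\<in>N. a k + b k > 0}"
  have ZN: "Z \<subseteq> N" by (auto simp: Z_def)
  have finZ: "finite Z" using fin ZN finite_subset by blast
  have s1: "(\<Sum>k\<in>N. w k * (real (a k) - t * real (b k))) = (\<Sum>k\<in>Z. w k * (real (a k) - t * real (b k)))"
    by (rule sum.mono_neutral_right[OF fin ZN]) (auto simp: Z_def)
  have s2: "(\<Sum>k\<in>N. (if \<bar>w k\<bar> = m then w k else 0) * real (a k)) = (\<Sum>k\<in>Z. (if \<bar>w k\<bar> = m then w k else 0) * real (a k))"
    by (rule sum.mono_neutral_right[OF fin ZN]) (auto simp: Z_def)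
  have s3: "(\<Sum>k\<in>Z. a k + b k) \<le> 2"
    using tok sum.mono_neutral_right[OF fin ZN, of "\<lambda>k. a k + b k"] by (auto simp: Z_def)
  have "card Z = (\<Sum>k\<in>Z. (1::nat))" by simp
  also have "\<dots> \<le> (\<Sum>k\<in>Z. a k + b k)"
    by (rule sum_mono) (auto simp: Z_def)
  finally have "card Z \<le> (\<Sum>k\<in>Z. a k + b k)" .
  with s3 have cZ: "card Z \<le> 2" by simp
  have eqZ: "(\<Sum>k\<in>Z. w k * (real (a k) - t * real (b k))) = 0" using eq s1 by simp
  have wbZ: "\<forall>k\<in>Z. \<bar>w k\<bar> \<le> m" using wb ZN by auto
  have posZ: "\<forall>k\<in>Z. a k + b k > 0" by (auto simp: Z_def)
  have "(\<Sum>k\<in>Z. (if \<bar>w k\<bar> = m then w k else 0) * real (a k)) = 0"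
  proof (cases "card Z")
    case 0 then have "Z = {}" using finZ by simp
    then show ?thesis by simp
  next
    case (Suc n)
    show ?thesis
    proof (cases n)
      case 0
      then obtain p where Zp: "Z = {p}" using Suc card_1_singletonE by auto
      then have "a p + b p \<le> 2" "a p + b p > 0" "\<bar>w p\<bar> \<le> m" and e: "w p * (real (a p) - t * real (b p)) = 0"
        using s3 posZ wbZ eqZ by auto
      have "(if \<bar>w p\<bar> = m then w p else 0) * real (a p) = 0"
      proof (cases "\<bar>w p\<bar> = m")
        case True
        then have "w p \<noteq> 0" using m by auto
        then have ea: "real (a p) = t * real (b p)" using e by simp
        have "a p = 0"
        proof (rule ccontr)
          assume "a p \<noteq> 0"
          then have "1 \<le> t * real (b p)" using ea by simp
          then have "b p \<noteq> 0" by (cases "b p") auto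
          then have "t * real (b p) < real (b p)" using t by simp
          then have "real (b p) > 1" using \<open>1 \<le> t * real (b p)\<close> by linarith
          then have "b p \<ge> 2" by linarith
          then show False using \<open>a p \<noteq> 0\<close> \<open>a p + b p \<le> 2\<close> by simp
        qed
        then show ?thesis by simp
      qed simp
      then show ?thesis unfolding Zp by simp
    next
      case (Suc n')
      then have "card Z = 2" using cZ \<open>card Z = Suc n\<close> by simp
      then obtain p q where Zpq: "Z = {p, q}" "p \<noteq> q" by (meson card_2_iff)
      then have h: "a p + b p + (a q + b q) \<le> 2" "a p + b p > 0" "a q + b q > 0"
        "\<bar>w p\<bar> \<le> m" "\<bar>w q\<bar> \<le> m"
        and e: "w p * (real (a p) - t * real (b p)) + w q * (real (a q) - t * real (b q)) = 0"
        using s3 posZ wbZ eqZ by auto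
      then have ab: "a p + b p = 1" "a q + b q = 1" by auto
      have goal: "(if \<bar>w p\<bar> = m then w p else 0) * real (a p) + (if \<bar>w q\<bar> = m then w q else 0) * real (a q) = 0"
      proof -
        have cp: "(a p = 1 \<and> b p = 0) \<or> (a p = 0 \<and> b p = 1)" using ab(1) by linarith
        have cq: "(a q = 1 \<and> b q = 0) \<or> (a q = 0 \<and> b q = 1)" using ab(2) by linarith
        show ?thesis using cp cq
        proof (elim disjE conjE)
          assume "a p = 1" "b p = 0" "a q = 1" "b q = 0"
          then have "w p = - w q" using e by simp
          then show ?thesis using \<open>a p = 1\<close> \<open>a q = 1\<close> by auto
        next
          assume "a p = 1" "b p = 0" "a q = 0" "b q = 1"
          then have wp: "w p = t * w q" using e by simp
          have "\<bar>w p\<bar> \<le> t * m" unfolding wp abs_mult using t h(5) by (simp add: mult_left_mono)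
          moreover have "t * m < m" using t m by simp
          ultimately have "\<bar>w p\<bar> \<noteq> m" by linarith
          then show ?thesis using \<open>a q = 0\<close> by simp
        next
          assume "a p = 0" "b p = 1" "a q = 1" "b q = 0"
          then have wq: "w q = t * w p" using e by simp
          have "\<bar>w q\<bar> \<le> t * m" unfolding wq abs_mult using t h(4) by (simp add: mult_left_mono)
          moreover have "t * m < m" using t m by simp
          ultimately have "\<bar>w q\<bar> \<noteq> m" by linarith
          then show ?thesis using \<open>a p = 0\<close> by simp
        next
          assume "a p = 0" "b p = 1" "a q = 0" "b q = 1"
          then show ?thesis by simp
        qed
      qed
      then show ?thesis unfolding Zpq(1) using Zpq(2) by simp
    qed
  qed
  then show ?thesis using s2 by simp
qed


lemma outflow_struct:
  assumes "is_outflow r"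
  shows "r = (unit_complex (SOME i. r = (unit_complex i, \<lambda>_. 0)), \<lambda>_. 0)"
  using assms unfolding is_outflow_def by (metis (mono_tags, lifting) someI_ex)

lemma unit_complex_inj: "unit_complex i = unit_complex j \<Longrightarrow> i = j"
  unfolding unit_complex_def by (metis zero_neq_one)

lemma real_if01: "real (if P then 1 else 0) = (if P then 1 else 0)" by simp

lemma key_nonsing:
  fixes \<sigma> :: "'n::finite \<Rightarrow> 'n reaction"
  assumes inj: "inj \<sigma>"
    and noin: "\<forall>k. \<not> is_inflow (\<sigma> k)"
    and tok: "\<And>j. (\<forall>k. is_outflow (\<sigma> k) \<longrightarrow> fst (\<sigma> k) j = 0) \<Longrightarrow>
               (\<Sum>k\<in>{k. \<not> is_outflow (\<sigma> k)}. fst (\<sigma> k) j + snd (\<sigma> k) j) \<le> 2"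
    and dM: "det (reactant_matrix \<sigma>) \<noteq> 0"
    and t: "0 \<le> t" "t < 1"
  shows "det (\<chi> k j. real (fst (\<sigma> k) j) - t * real (snd (\<sigma> k) j)) \<noteq> 0"
proof
  define Q where "Q = (\<chi> k j. real (fst (\<sigma> k) j) - t * real (snd (\<sigma> k) j))"
  assume "det (\<chi> k j. real (fst (\<sigma> k) j) - t * real (snd (\<sigma> k) j)) = 0"
  then have "det Q = 0" by (simp add: Q_def)
  then obtain w where w0: "w \<noteq> 0" and wQ: "w v* Q = 0"
    using det_nz_left_null[of Q] by blast
  have col: "(\<Sum>k\<in>UNIV. w $ k * (real (fst (\<sigma> k) j) - t * real (snd (\<sigma> k) j))) = 0" for j
    using wQ unfolding vec_eq_iff vector_matrix_mult_def Q_def by simp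
  define N where "N = {k. \<not> is_outflow (\<sigma> k)}"
  define Out where "Out = - N"
  define sp where "sp k = (SOME i. \<sigma> k = (unit_complex i, \<lambda>_. 0))" for k
  have outf: "\<sigma> k = (unit_complex (sp k), \<lambda>_. 0)" if "k \<notin> N" for k
    using outflow_struct[of "\<sigma> k"] that by (simp add: N_def sp_def)
  have sp_inj: "k = k'" if "k \<notin> N" "k' \<notin> N" "sp k = sp k'" for k k'
    using outf[OF that(1)] outf[OF that(2)] that(3) inj by (metis injD)
  have fstout: "fst (\<sigma> k) j = (if j = sp k then 1 else 0)" if "k \<notin> N" for k j
    using outf[OF that] by (simp add: unit_complex_def)
  have sndout: "snd (\<sigma> k) j = 0" if "k \<notin> N" for k j
    using outf[OF that] by simp
  have OutN: "k \<in> Out \<longleftrightarrow> k \<notin> N" for k by (simp add: Out_def)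
  have sp_inj2: "k = k'" if "k \<in> Out" "k' \<in> Out" "sp k = sp k'" for k k'
    using sp_inj that OutN by blast
  have fstout2: "fst (\<sigma> k) j = (if j = sp k then 1 else 0)" if "k \<in> Out" for k j
    using fstout that OutN by blast
  have sndout2: "snd (\<sigma> k) j = 0" if "k \<in> Out" for k j
    using sndout that OutN by blast
  have split: "(\<Sum>k\<in>UNIV. f k) = (\<Sum>k\<in>N. f k) + (\<Sum>k\<in>Out. f k)" for f :: "'n \<Rightarrow> real"
    using sum.subset_diff[of N UNIV f] by (simp add: Out_def Compl_eq_Diff_UNIV add.commute)
  have single: "(\<Sum>k\<in>Out. f k * (if j = sp k then 1 else 0)) = (if (\<exists>q\<in>Out. sp q = j) then f (THE q. q \<in> Out \<and> sp q = j) else 0)"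
    for f :: "'n \<Rightarrow> real" and j
  proof (cases "\<exists>q\<in>Out. sp q = j")
    case True
    then obtain q where q: "q \<in> Out" "sp q = j" by blast
    have the: "(THE q. q \<in> Out \<and> sp q = j) = q"
      using q sp_inj2 by (intro the_equality) auto
    have "(\<Sum>k\<in>Out. f k * (if j = sp k then 1 else 0)) = (\<Sum>k\<in>{q}. f k * (if j = sp k then 1 else 0))"
      by (rule sum.mono_neutral_right) (use q sp_inj2 in auto)
    then show ?thesis using True the q by simp
  next
    case False
    then show ?thesis by (intro trans[OF sum.neutral]) auto
  qed
  show False
  proof (cases "\<forall>k\<in>N. w $ k = 0")
    case True
    have "w $ k = 0" for k
    proof (cases "k \<in> N")
      case False
      have "0 = (\<Sum>k'\<in>UNIV. w $ k' * (real (fst (\<sigma> k') (sp k)) - t * real (snd (\<sigma> k') (sp k))))"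
        using col[of "sp k"] by simp
      also have "\<dots> = (\<Sum>k'\<in>Out. w $ k' * (if sp k = sp k' then 1 else 0))"
        unfolding split using True by (simp add: fstout2 sndout2 real_if01)
      also have "\<dots> = w $ k"
      proof -
        have kO: "k \<in> Out" using False OutN by simp
        have the: "(THE q. q \<in> Out \<and> sp q = sp k) = k"
          by (rule the_equality) (use kO sp_inj2 in auto)
        show ?thesis unfolding single using kO the by auto
      qed
      finally show ?thesis by simp
    qed (use True in simp)
    then show False using w0 by (simp add: vec_eq_iff)
  next
    case False
    then obtain k0 where k0: "k0 \<in> N" "w $ k0 \<noteq> 0" by blast
    define m where "m = Max ((\<lambda>k. \<bar>w $ k\<bar>) ` N)"
    have finN: "finite N" by simp
    have mge: "\<bar>w $ k\<bar> \<le> m" if "k \<in> N" for k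
      unfolding m_def using that finN by (intro Max_ge) auto
    have mpos: "m > 0" using mge[OF k0(1)] k0(2) by simp
    have "m \<in> (\<lambda>k. \<bar>w $ k\<bar>) ` N" unfolding m_def using finN k0(1) by (intro Max_in) auto
    then obtain k1 where k1: "k1 \<in> N" "\<bar>w $ k1\<bar> = m" by auto
    define g where "g k = (if \<bar>w $ k\<bar> = m then w $ k else 0)" for k
    define u :: "real^'n" where "u = (\<chi> k. if k \<in> N then g k
              else - (\<Sum>k'\<in>N. g k' * real (fst (\<sigma> k') (sp k))))"
    have "u v* reactant_matrix \<sigma> = 0"
    proof -
      have "(\<Sum>k\<in>UNIV. u $ k * real (fst (\<sigma> k) j)) = 0" for j
      proof -
        have "(\<Sum>k\<in>UNIV. u $ k * real (fst (\<sigma> k) j)) =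
              (\<Sum>k\<in>N. g k * real (fst (\<sigma> k) j)) + (\<Sum>k\<in>Out. u $ k * (if j = sp k then 1 else 0))"
          unfolding split by (simp add: u_def fstout2 real_if01)
        also have "\<dots> = 0"
        proof (cases "\<exists>q\<in>Out. sp q = j")
          case True
          then obtain q where q: "q \<in> Out" "sp q = j" by blast
          have the: "(THE q. q \<in> Out \<and> sp q = j) = q"
            using q sp_inj2 by (intro the_equality) auto
          show ?thesis unfolding single using True the q by (simp add: u_def OutN)
        next
          case False
          have "(\<Sum>k\<in>N. g k * real (fst (\<sigma> k) j)) = 0"
            unfolding g_def
          proof (rule token_lemma[where b = "\<lambda>k. snd (\<sigma> k) j" and t = t, OF finN])
            show "(\<Sum>k\<in>N. fst (\<sigma> k) j + snd (\<sigma> k) j) \<le> 2"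
              unfolding N_def
            proof (rule tok, intro allI impI)
              fix k assume "is_outflow (\<sigma> k)"
              then have "k \<in> Out" by (simp add: OutN N_def)
              then show "fst (\<sigma> k) j = 0" using False fstout2[of k j] by auto
            qed
            show "\<forall>k\<in>N. \<bar>w $ k\<bar> \<le> m" using mge by auto
            show "0 < m" "0 \<le> t" "t < 1" using mpos t by auto
            have "0 = (\<Sum>k\<in>UNIV. w $ k * (real (fst (\<sigma> k) j) - t * real (snd (\<sigma> k) j)))"
              using col by simp
            also have "\<dots> = (\<Sum>k\<in>N. w $ k * (real (fst (\<sigma> k) j) - t * real (snd (\<sigma> k) j)))"
              unfolding split using False by (simp add: fstout2 sndout2 real_if01, intro sum.neutral, auto)
            finally show "(\<Sum>k\<in>N. w $ k * (real (fst (\<sigma> k) j) - t * real (snd (\<sigma> k) j))) = 0" by simp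
          qed
          then show ?thesis unfolding single using False by simp
        qed
        finally show ?thesis .
      qed
      then show ?thesis unfolding vec_eq_iff vector_matrix_mult_def reactant_matrix_def by simp
    qed
    moreover have "u \<noteq> 0"
    proof
      assume "u = 0"
      then have "u $ k1 = 0" by simp
      then show False using k1 mpos by (simp add: u_def g_def)
    qed
    ultimately show False using dM det_nz_left_null by blast
  qed
qed


lemma det_swap_zero:
  fixes \<sigma> :: "'n::finite \<Rightarrow> 'n reaction"
  assumes kl: "k \<noteq> l" and sw: "\<sigma> l = (snd (\<sigma> k), fst (\<sigma> k))"
  shows "det (reaction_matrix \<sigma>) = 0"
proof -
  let ?A = "reaction_matrix \<sigma>"
  have A: "?A = (\<chi> i. if i = l then (-1) *s (?A $ k) else ?A $ i)"
    using sw by (simp add: vec_eq_iff reaction_matrix_def)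
  have "det ?A = -1 * det (\<chi> i. if i = l then ?A $ k else ?A $ i)"
    by (subst A) (rule det_row_mul)
  also have "det (\<chi> i. if i = l then ?A $ k else ?A $ i) = 0"
    by (rule det_identical_rows[OF kl]) (simp add: row_def vec_eq_iff)
  finally show ?thesis by simp
qed

lemma jac_pair:
  fixes G :: "('n::finite) reaction set" and \<sigma> :: "'n \<Rightarrow> 'n reaction"
  assumes CF: "CFSTR G" and TMb: "\<forall>i. TM G i \<le> 2"
    and inj: "inj \<sigma>" and rng: "range \<sigma> \<subseteq> G" and noin: "\<forall>k. \<not> is_inflow (\<sigma> k)"
  shows "det (reactant_matrix \<sigma>) * det (reaction_matrix \<sigma>) \<ge> 0"
proof (cases "\<exists>k l. k \<noteq> l \<and> \<sigma> l = (snd (\<sigma> k), fst (\<sigma> k))")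
  case True
  then obtain k l where "k \<noteq> l" "\<sigma> l = (snd (\<sigma> k), fst (\<sigma> k))" by blast
  then have "det (reaction_matrix \<sigma>) = 0" by (rule det_swap_zero)
  then show ?thesis by simp
next
  case norev: False
  have RN: "reaction_network G" using CF by (simp add: CFSTR_def)
  have finG: "finite G" using RN by (simp add: reaction_network_def)
  have neq: "fst (\<sigma> k) \<noteq> snd (\<sigma> k)" for k
  proof -
    have "\<forall>r\<in>G. fst r \<noteq> snd r" using RN unfolding reaction_network_def by auto
    moreover have "\<sigma> k \<in> G" using rng by auto
    ultimately show ?thesis by blast
  qed
  have tok: "(\<Sum>k\<in>{k. \<not> is_outflow (\<sigma> k)}. fst (\<sigma> k) j + snd (\<sigma> k) j) \<le> 2" for j
  proof -
    define N where "N = {k. \<not> is_outflow (\<sigma> k)}"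
    define pr where "pr k = {fst (\<sigma> k), snd (\<sigma> k)}" for k
    define I where "I = {{y, y'} | y y'. (y, y') \<in> G \<and> \<not> is_flow (y, y')}"
    have injpr: "inj_on pr N"
    proof (rule inj_onI)
      fix k l assume "k \<in> N" "l \<in> N" "pr k = pr l"
      then have "(fst (\<sigma> k) = fst (\<sigma> l) \<and> snd (\<sigma> k) = snd (\<sigma> l)) \<or>
                 (fst (\<sigma> k) = snd (\<sigma> l) \<and> snd (\<sigma> k) = fst (\<sigma> l))"
        unfolding pr_def by (simp add: doubleton_eq_iff)
      then show "k = l"
      proof
        assume "fst (\<sigma> k) = fst (\<sigma> l) \<and> snd (\<sigma> k) = snd (\<sigma> l)"
        then have "\<sigma> k = \<sigma> l" by (simp add: prod_eq_iff)
        then show ?thesis using inj by (simp add: injD)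
      next
        assume "fst (\<sigma> k) = snd (\<sigma> l) \<and> snd (\<sigma> k) = fst (\<sigma> l)"
        then have "\<sigma> l = (snd (\<sigma> k), fst (\<sigma> k))" by (simp add: prod_eq_iff)
        then show ?thesis using norev by blast
      qed
    qed
    have prI: "pr ` N \<subseteq> I"
    proof
      fix c assume "c \<in> pr ` N"
      then obtain k where k: "k \<in> N" "c = pr k" by blast
      have "\<sigma> k \<in> G" using rng by auto
      moreover have "\<not> is_flow (\<sigma> k)" using k(1) noin by (simp add: N_def is_flow_def)
      ultimately show "c \<in> I" unfolding I_def k(2) pr_def
        by (intro CollectI exI[of _ "fst (\<sigma> k)"] exI[of _ "snd (\<sigma> k)"]) simp
    qed
    have finI: "finite I"
    proof (rule finite_subset)
      show "I \<subseteq> (\<lambda>r. {fst r, snd r}) ` G" unfolding I_def by force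
      show "finite ((\<lambda>r. {fst r, snd r}) ` G)" using finG by simp
    qed
    have "(\<Sum>k\<in>N. fst (\<sigma> k) j + snd (\<sigma> k) j) = (\<Sum>k\<in>N. \<Sum>z\<in>pr k. z j)"
      by (rule sum.cong) (auto simp: pr_def neq)
    also have "\<dots> = (\<Sum>c\<in>pr ` N. \<Sum>z\<in>c. z j)"
      by (rule sum.reindex[OF injpr, symmetric, unfolded comp_def])
    also have "\<dots> \<le> (\<Sum>c\<in>I. \<Sum>z\<in>c. z j)"
      by (rule sum_mono2[OF finI prI]) simp
    also have "\<dots> = TM G j" unfolding TM_def I_def ..
    finally show ?thesis using TMb N_def by (metis order_trans)
  qed
  show ?thesis
  proof (cases "det (reactant_matrix \<sigma>) = 0")
    case True then show ?thesis by simp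
  next
    case dM: False
    define h where "h t = det (\<chi> k j. real (fst (\<sigma> k) j) - t * real (snd (\<sigma> k) j) :: real^'n^'n)" for t
    have h0: "h 0 = det (reactant_matrix \<sigma>)"
      unfolding h_def reactant_matrix_def by simp
    have h1: "h 1 = det (reaction_matrix \<sigma>)"
      unfolding h_def reaction_matrix_def by simp
    have hnz: "h t \<noteq> 0" if "0 \<le> t" "t < 1" for t
      unfolding h_def by (rule key_nonsing[OF inj noin tok dM that])
    have cont: "continuous_on {0..1} h"
      unfolding h_def det_def by (intro continuous_intros)
    show ?thesis
    proof (rule ccontr)
      assume neg: "\<not> 0 \<le> det (reactant_matrix \<sigma>) * det (reaction_matrix \<sigma>)"
      then have "h 0 * h 1 < 0" unfolding h0 h1 by simp
      then have "(h 0 < 0 \<and> 0 < h 1) \<or> (h 1 < 0 \<and> 0 < h 0)"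
        by (auto simp: mult_less_0_iff)
      then have "\<exists>x. 0 \<le> x \<and> x \<le> 1 \<and> h x = 0"
      proof
        assume "h 0 < 0 \<and> 0 < h 1"
        then show ?thesis using IVT'[of h 0 0 1, OF _ _ _ cont] by simp
      next
        assume "h 1 < 0 \<and> 0 < h 0"
        then show ?thesis using IVT2'[of h 1 0 0, OF _ _ _ cont] by simp
      qed
      then obtain x where x: "0 \<le> x" "x \<le> 1" "h x = 0" by blast
      have "x \<noteq> 1" using x neg h1 by auto
      then show False using hnz x by simp
    qed
  qed
qed


lemma sum_perm_reindex:
  fixes g :: "('n::finite \<Rightarrow> 'a) \<Rightarrow> real"
  assumes p: "\<pi> permutes (UNIV :: 'n set)"
  shows "(\<Sum>f\<in>{f. \<forall>i. f i \<in> G}. g f) = (\<Sum>f\<in>{f. \<forall>i. f i \<in> G}. g (f \<circ> \<pi>))"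
proof (rule sum.reindex_bij_witness[symmetric, where j = "\<lambda>f. f \<circ> \<pi>" and i = "\<lambda>f. f \<circ> inv \<pi>"])
  show "\<And>a. a \<in> {f. \<forall>i. f i \<in> G} \<Longrightarrow> a \<circ> \<pi> \<circ> inv \<pi> = a"
    using permutes_inverses(1)[OF p] by (auto simp: fun_eq_iff)
  show "\<And>a. a \<in> {f. \<forall>i. f i \<in> G} \<Longrightarrow> a \<circ> inv \<pi> \<circ> \<pi> = a"
    using permutes_inverses(2)[OF p] by (auto simp: fun_eq_iff)
qed auto

lemma group_sum:
  fixes f :: "'n::finite \<Rightarrow> 'n reaction" and c :: "'n reaction \<Rightarrow> real"
  shows "(\<Sum>\<pi>\<in>{p. p permutes (UNIV::'n set)}.
            (\<Prod>i\<in>UNIV. c (f (\<pi> i)) * real (fst (f (\<pi> i)) i)) * det (reaction_matrix (f \<circ> \<pi>)))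
       = (\<Prod>i\<in>UNIV. c (f i)) * det (reactant_matrix f) * det (reaction_matrix f)"
proof -
  have step: "(\<Prod>i\<in>UNIV. c (f (\<pi> i)) * real (fst (f (\<pi> i)) i)) * det (reaction_matrix (f \<circ> \<pi>))
     = ((\<Prod>i\<in>UNIV. c (f i)) * det (reaction_matrix f)) *
       (of_int (sign \<pi>) * (\<Prod>i\<in>UNIV. transpose (reactant_matrix f) $ i $ \<pi> i))"
    if p: "\<pi> permutes (UNIV::'n set)" for \<pi>
  proof -
    have "(\<Prod>i\<in>UNIV. c (f (\<pi> i)) * real (fst (f (\<pi> i)) i)) =
          (\<Prod>i\<in>UNIV. c (f (\<pi> i))) * (\<Prod>i\<in>UNIV. real (fst (f (\<pi> i)) i))"
      by (rule prod.distrib)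
    also have "(\<Prod>i\<in>UNIV. c (f (\<pi> i))) = (\<Prod>i\<in>UNIV. c (f i))"
      using prod.permute[OF p, of "\<lambda>i. c (f i)"] by (simp add: comp_def)
    finally have 1: "(\<Prod>i\<in>UNIV. c (f (\<pi> i)) * real (fst (f (\<pi> i)) i)) =
          (\<Prod>i\<in>UNIV. c (f i)) * (\<Prod>i\<in>UNIV. transpose (reactant_matrix f) $ i $ \<pi> i)"
      by (simp add: transpose_def reactant_matrix_def)
    have "reaction_matrix (f \<circ> \<pi>) = (\<chi> i. reaction_matrix f $ \<pi> i)"
      by (simp add: reaction_matrix_def vec_eq_iff)
    then have 2: "det (reaction_matrix (f \<circ> \<pi>)) = of_int (sign \<pi>) * det (reaction_matrix f)"
      using det_permute_rows[OF p] by simp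
    show ?thesis unfolding 1 2 by (simp add: algebra_simps)
  qed
  have "(\<Sum>\<pi>\<in>{p. p permutes (UNIV::'n set)}.
            (\<Prod>i\<in>UNIV. c (f (\<pi> i)) * real (fst (f (\<pi> i)) i)) * det (reaction_matrix (f \<circ> \<pi>)))
      = (\<Sum>\<pi>\<in>{p. p permutes (UNIV::'n set)}. ((\<Prod>i\<in>UNIV. c (f i)) * det (reaction_matrix f)) *
       (of_int (sign \<pi>) * (\<Prod>i\<in>UNIV. transpose (reactant_matrix f) $ i $ \<pi> i)))"
    by (rule sum.cong) (auto simp: step)
  also have "\<dots> = ((\<Prod>i\<in>UNIV. c (f i)) * det (reaction_matrix f)) * det (transpose (reactant_matrix f))"
    unfolding det_def[of "transpose (reactant_matrix f)"] by (simp add: sum_distrib_left)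
  finally show ?thesis by simp
qed

lemma det_linear_rows_sum_lemma_gen:
  fixes S :: "'b set"
  assumes fS: "finite S"
    and fT: "finite T"
  shows "det ((\<chi> i. if i \<in> T then sum (a i) S else c i):: 'a::comm_ring_1^'n::finite^'n) =
    sum (\<lambda>f. det((\<chi> i. if i \<in> T then a i (f i) else c i)::'a^'n^'n))
      {f. (\<forall>i \<in> T. f i \<in> S) \<and> (\<forall>i. i \<notin> T \<longrightarrow> f i = d)}"
  using fT
proof (induct T arbitrary: a c set: finite)
  case empty
  have th0: "\<And>x y. (\<chi> i. if i \<in> {} then x i else y i) = (\<chi> i. y i)"
    by vector
  have "{f. (\<forall>i \<in> {}. f i \<in> S) \<and> (\<forall>i. i \<notin> {} \<longrightarrow> f i = d)} = {\<lambda>_. d}"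
    by auto
  note e = this
  show ?case
    unfolding th0 e by simp
next
  case (insert z T a c)
  let ?F = "\<lambda>T. {f. (\<forall>i \<in> T. f i \<in> S) \<and> (\<forall>i. i \<notin> T \<longrightarrow> f i = d)}"
  let ?h = "\<lambda>(y,g) i. if i = z then y else g i"
  let ?k = "\<lambda>h. (h(z),(\<lambda>i. if i = z then d else h i))"
  have thif: "\<And>a b c d. (if a \<or> b then c else d) = (if a then c else if b then c else d)"
    by simp
  have thif2: "\<And>a b c d e. (if a then b else if c then d else e) =
     (if c then (if a then b else d) else (if a then b else e))"
    by simp
  from \<open>z \<notin> T\<close> have nz: "\<And>i. i \<in> T \<Longrightarrow> i \<noteq> z"
    by auto
  have "det (\<chi> i. if i \<in> insert z T then sum (a i) S else c i) =
    det (\<chi> i. if i = z then sum (a i) S else if i \<in> T then sum (a i) S else c i)"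
    unfolding insert_iff thif ..
  also have "\<dots> = (\<Sum>j\<in>S. det (\<chi> i. if i \<in> T then sum (a i) S else if i = z then a i j else c i))"
    unfolding det_linear_row_sum[OF fS]
    by (subst thif2) (simp add: nz cong: if_cong)
  finally have tha:
    "det (\<chi> i. if i \<in> insert z T then sum (a i) S else c i) =
     (\<Sum>(j, f)\<in>S \<times> ?F T. det (\<chi> i. if i \<in> T then a i (f i)
                                else if i = z then a i j
                                else c i))"
    unfolding insert.hyps unfolding sum.cartesian_product by blast
  show ?case unfolding tha
    using \<open>z \<notin> T\<close>
    by (intro sum.reindex_bij_witness[where i="?k" and j="?h"])
       (auto intro!: cong[OF refl[of det]] simp: vec_eq_iff)
qed

lemma det_linear_rows_sum_gen:
  fixes S :: "'b set"
  assumes fS: "finite S"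
  shows "det (\<chi> i. sum (a i) S) =
    sum (\<lambda>f. det (\<chi> i. a i (f i) :: 'a::comm_ring_1 ^ 'n::finite^'n)) {f. \<forall>i. f i \<in> S}"
proof -
  have th0: "\<And>x y. ((\<chi> i. if i \<in> (UNIV:: 'n set) then x i else y i) :: 'a^'n^'n) = (\<chi> i. x i)"
    by vector
  from det_linear_rows_sum_lemma_gen[OF fS, of "UNIV :: 'n set" a, unfolded th0, OF finite]
  show ?thesis by simp
qed

lemma finite_funs_into: "finite G \<Longrightarrow> finite {f :: 'n::finite \<Rightarrow> 'a. \<forall>i. f i \<in> G}"
  using finite_set_of_finite_funs[of "UNIV :: 'n set" G undefined] by simp

lemma term_nonneg:
  fixes G :: "('n::finite) reaction set" and f :: "'n \<Rightarrow> 'n reaction"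
  assumes CF: "CFSTR G" and TMb: "\<forall>i. TM G i \<le> 2" and fG: "\<forall>i. f i \<in> G"
  shows "det (reactant_matrix f) * det (reaction_matrix f) \<ge> 0"
proof (cases "inj f \<and> (\<forall>k. \<not> is_inflow (f k))")
  case True
  then show ?thesis using jac_pair[OF CF TMb] fG by blast
next
  case False
  have "det (reactant_matrix f) = 0"
  proof (cases "inj f")
    case True
    with False obtain k where "is_inflow (f k)" by blast
    then have "fst (f k) = (\<lambda>_. 0)" unfolding is_inflow_def by auto
    then have "row k (reactant_matrix f) = 0"
      by (simp add: row_def reactant_matrix_def vec_eq_iff)
    then show ?thesis by (rule det_zero_row(1))
  next
    case False
    then obtain k l where "k \<noteq> l" "f k = f l" unfolding inj_def by blast
    then show ?thesis
      by (intro det_identical_rows[of k l]) (auto simp: row_def reactant_matrix_def vec_eq_iff)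
  qed
  then show ?thesis by simp
qed

lemma pos_det:
  fixes G :: "('n::finite) reaction set" and c :: "'n reaction \<Rightarrow> real"
  assumes CF: "CFSTR G" and TMb: "\<forall>i. TM G i \<le> 2" and cpos: "\<forall>r\<in>G. c r > 0"
  shows "det (\<chi> i j. \<Sum>r\<in>G. c r * real (fst r i) * (real (fst r j) - real (snd r j)) :: real^'n^'n) > 0"
proof -
  have finG: "finite G" using CF by (simp add: CFSTR_def reaction_network_def)
  define F where "F = {f :: 'n \<Rightarrow> 'n reaction. \<forall>i. f i \<in> G}"
  have finF: "finite F" unfolding F_def using finG by (rule finite_funs_into)
  define Rrow where "Rrow r = (\<chi> j. real (fst r j) - real (snd r j) :: real^'n)" for r :: "'n reaction"
  define g where "g f = (\<Prod>i\<in>UNIV. c (f i) * real (fst (f i) i)) * det (reaction_matrix f)" for f :: "'n \<Rightarrow> 'n reaction"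
  define B where "B = (\<chi> i j. \<Sum>r\<in>G. c r * real (fst r i) * (real (fst r j) - real (snd r j)) :: real^'n^'n)"
  have B: "B = (\<chi> i. \<Sum>r\<in>G. (c r * real (fst r i)) *s Rrow r)"
    unfolding B_def Rrow_def by (simp add: vec_eq_iff sum_component mult.assoc)
  have detB: "det B = (\<Sum>f\<in>F. g f)"
  proof -
    have "det B = (\<Sum>f\<in>F. det (\<chi> i. (c (f i) * real (fst (f i) i)) *s Rrow (f i)))"
      unfolding B F_def by (rule det_linear_rows_sum_gen[OF finG])
    also have "\<dots> = (\<Sum>f\<in>F. g f)"
    proof (rule sum.cong[OF refl])
      fix f
      have "(\<chi> i. Rrow (f i)) = reaction_matrix f"
        by (simp add: Rrow_def reaction_matrix_def vec_eq_iff)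
      then show "det (\<chi> i. (c (f i) * real (fst (f i) i)) *s Rrow (f i)) = g f"
        unfolding g_def det_rows_mul[of "\<lambda>i. c (f i) * real (fst (f i) i)" "\<lambda>i. Rrow (f i)"] by simp
    qed
    finally show ?thesis .
  qed
  define P where "P = {p. p permutes (UNIV::'n set)}"
  have "(\<Sum>\<pi>\<in>P. det B) = (\<Sum>\<pi>\<in>P. \<Sum>f\<in>F. g (f \<circ> \<pi>))"
    unfolding detB P_def F_def by (rule sum.cong[OF refl]) (rule sum_perm_reindex, simp)
  also have "\<dots> = (\<Sum>f\<in>F. \<Sum>\<pi>\<in>P. g (f \<circ> \<pi>))"
    by (rule sum.swap)
  also have "\<dots> = (\<Sum>f\<in>F. (\<Prod>i\<in>UNIV. c (f i)) * (det (reactant_matrix f) * det (reaction_matrix f)))"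
    unfolding P_def g_def using group_sum[of c] by (simp add: mult.assoc comp_def)
  also have "\<dots> > 0"
  proof (rule sum_pos2[OF finF])
    define f0 where "f0 i = (unit_complex i, (\<lambda>_::'n. 0::nat))" for i :: 'n
    have outG: "\<forall>i. (unit_complex i, (\<lambda>_::'n. 0::nat)) \<in> G" using CF unfolding CFSTR_def by blast
    show "f0 \<in> F" using outG by (simp add: F_def f0_def)
    have "reactant_matrix f0 = mat 1" "reaction_matrix f0 = mat 1"
      by (simp_all add: reactant_matrix_def reaction_matrix_def f0_def mat_def unit_complex_def vec_eq_iff)
    moreover have "(\<Prod>i\<in>UNIV. c (f0 i)) > 0"
      using outG cpos by (intro prod_pos) (simp add: f0_def)
    ultimately show "0 < (\<Prod>i\<in>UNIV. c (f0 i)) * (det (reactant_matrix f0) * det (reaction_matrix f0))"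
      by simp
    show "0 \<le> (\<Prod>i\<in>UNIV. c (f i)) * (det (reactant_matrix f) * det (reaction_matrix f))"
      if "f \<in> F" for f
    proof -
      from that have fG: "\<forall>i. f i \<in> G" by (simp add: F_def)
      have "(\<Prod>i\<in>UNIV. c (f i)) \<ge> 0" using cpos fG by (intro prod_nonneg) (auto intro: less_imp_le)
      moreover have "det (reactant_matrix f) * det (reaction_matrix f) \<ge> 0"
        by (rule term_nonneg[OF CF TMb fG])
      ultimately show "0 \<le> (\<Prod>i\<in>UNIV. c (f i)) * (det (reactant_matrix f) * det (reaction_matrix f))"
        by simp
    qed
  qed
  finally have pos: "0 < (\<Sum>\<pi>\<in>P. det B)" .
  have "(\<Sum>\<pi>\<in>P. det B) = of_nat (card P) * det B" by (rule sum_constant)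
  with pos have "0 < of_nat (card P) * det B" by simp
  then have "det B > 0" using zero_less_mult_iff of_nat_0_le_iff by (metis not_less)
  then show ?thesis unfolding B_def .
qed


lemma monom_exp:
  fixes x :: "real^'n::finite"
  assumes "positive_vec x"
  shows "(\<Prod>j\<in>UNIV. (x $ j) ^ y j) = exp (\<Sum>j\<in>UNIV. real (y j) * ln (x $ j))"
proof -
  have "exp (\<Sum>j\<in>UNIV. real (y j) * ln (x $ j)) = (\<Prod>j\<in>UNIV. exp (real (y j) * ln (x $ j)))"
    by (simp add: exp_sum)
  also have "\<dots> = (\<Prod>j\<in>UNIV. (x $ j) ^ y j)"
  proof (rule prod.cong[OF refl])
    fix j
    have "x $ j > 0" using assms by (simp add: positive_vec_def)
    then show "exp (real (y j) * ln (x $ j)) = (x $ j) ^ y j"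
      by (simp add: exp_of_nat_mult)
  qed
  finally show ?thesis by simp
qed

lemma exp_diff_factor:
  fixes a b :: real
  shows "\<exists>l>0. exp a - exp b = l * (a - b)"
proof (cases "a = b")
  case True then show ?thesis by (intro exI[of _ 1]) simp
next
  case False
  define l where "l = (exp a - exp b) / (a - b)"
  have "l > 0"
  proof (cases "a < b")
    case True then have "exp a < exp b" by simp
    with True show ?thesis unfolding l_def by (simp add: divide_neg_neg)
  next
    case False then have "b < a" using \<open>a \<noteq> b\<close> by simp
    then have "exp b < exp a" by simp
    with \<open>b < a\<close> show ?thesis unfolding l_def by simp
  qed
  moreover have "exp a - exp b = l * (a - b)" unfolding l_def using False by simp
  ultimately show ?thesis by blast
qed

lemma mass_action_comp:
  "mass_action G \<kappa> x $ j = (\<Sum>r\<in>G. \<kappa> r * (\<Prod>i\<in>UNIV. (x $ i) ^ fst r i) * (real (snd r j) - real (fst r j)))"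
  unfolding mass_action_def by (simp add: sum_component)

theorem mainTheorem1:
  fixes G :: "('n::finite) reaction set"
  assumes "CFSTR G"
    and "\<forall>i. TM G i \<le> 2"
  shows "passes_jacobian_criterion G \<and> no_multiple_steady_states G"
proof
  note CF = assms(1) and TMb = assms(2)
  show "passes_jacobian_criterion G"
    unfolding passes_jacobian_criterion_def orientation_def
  proof (intro allI impI)
    fix \<sigma> :: "'n \<Rightarrow> 'n reaction"
    assume "inj \<sigma>" "range \<sigma> \<subseteq> G" "\<forall>k. \<not> is_inflow (\<sigma> k)"
    then have "0 \<le> det (reactant_matrix \<sigma>) * det (reaction_matrix \<sigma>)"
      by (rule jac_pair[OF CF TMb])
    then show "0 \<le> sgn (det (reactant_matrix \<sigma>) * det (reaction_matrix \<sigma>))"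
      by (simp add: sgn_if)
  qed
  show "no_multiple_steady_states G"
    unfolding no_multiple_steady_states_def
  proof (intro allI impI)
    fix \<kappa> :: "'n reaction \<Rightarrow> real" and x z :: "real^'n"
    assume kpos: "\<forall>r\<in>G. 0 < \<kappa> r" and px: "positive_vec x" and pz: "positive_vec z"
      and fx: "mass_action G \<kappa> x = 0" and fz: "mass_action G \<kappa> z = 0"
    define ax where "ax r = (\<Sum>j\<in>UNIV. real (fst r j) * ln (x $ j))" for r :: "'n reaction"
    define az where "az r = (\<Sum>j\<in>UNIV. real (fst r j) * ln (z $ j))" for r :: "'n reaction"
    define lam where "lam r = (SOME l. l > 0 \<and> exp (ax r) - exp (az r) = l * (ax r - az r))" for r
    have lam: "lam r > 0 \<and> exp (ax r) - exp (az r) = lam r * (ax r - az r)" for r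
      unfolding lam_def using exp_diff_factor[of "ax r" "az r"] by (rule someI_ex) 
    define c where "c r = \<kappa> r * lam r" for r
    have cpos: "\<forall>r\<in>G. c r > 0" using kpos lam by (simp add: c_def)
    define B where "B = (\<chi> i j. \<Sum>r\<in>G. c r * real (fst r i) * (real (fst r j) - real (snd r j)) :: real^'n^'n)"
    have dB: "det B \<noteq> 0" using pos_det[OF CF TMb cpos] unfolding B_def by simp
    define \<delta> :: "real^'n" where "\<delta> = (\<chi> i. ln (x $ i) - ln (z $ i))"
    have axz: "ax r - az r = (\<Sum>i\<in>UNIV. real (fst r i) * \<delta> $ i)" for r
      unfolding ax_def az_def \<delta>_def by (simp add: sum_subtractf[symmetric] algebra_simps)
    have "\<delta> v* B = 0"
    proof -
      have "(\<Sum>i\<in>UNIV. \<delta> $ i * B $ i $ j) = 0" for j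
      proof -
        have "(\<Sum>i\<in>UNIV. \<delta> $ i * B $ i $ j)
            = (\<Sum>i\<in>UNIV. \<Sum>r\<in>G. \<delta> $ i * (c r * real (fst r i) * (real (fst r j) - real (snd r j))))"
          unfolding B_def by (simp add: sum_distrib_left)
        also have "\<dots> = (\<Sum>r\<in>G. \<Sum>i\<in>UNIV. \<delta> $ i * (c r * real (fst r i) * (real (fst r j) - real (snd r j))))"
          by (rule sum.swap)
        also have "\<dots> = (\<Sum>r\<in>G. c r * (ax r - az r) * (real (fst r j) - real (snd r j)))"
          unfolding axz by (simp add: sum_distrib_left sum_distrib_right algebra_simps)
        also have "\<dots> = (\<Sum>r\<in>G. \<kappa> r * (exp (ax r) - exp (az r)) * (real (fst r j) - real (snd r j)))"
          using lam by (simp add: c_def mult.assoc)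
        also have "\<dots> = mass_action G \<kappa> z $ j - mass_action G \<kappa> x $ j"
          unfolding mass_action_comp monom_exp[OF px] monom_exp[OF pz] ax_def az_def
          by (simp add: sum_subtractf[symmetric] algebra_simps)
        also have "\<dots> = 0" using fx fz by simp
        finally show ?thesis .
      qed
      then show ?thesis by (simp add: vec_eq_iff vector_matrix_mult_def)
    qed
    then have "\<delta> = 0" using dB det_nz_left_null by blast
    then show "x = z"
    proof (subst vec_eq_iff, intro allI)
      fix i
      assume "\<delta> = 0"
      then have "ln (x $ i) = ln (z $ i)" unfolding \<delta>_def by (simp add: vec_eq_iff)
      moreover have "x $ i > 0" "z $ i > 0" using px pz by (auto simp: positive_vec_def)
      ultimately show "x $ i = z $ i" by simp
    qed
  qed
qed

end
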